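(* Let $2 \le m < 50$. In every Nash equilibrium of the imbalanced $(m,3)$-RPS, at least two players choose mixed strategies that assign positive probability to the object $S$.
   Context: An $(m,n)$-RPS game is a symmetric, zero-sum, win/lose game with $m$ players and $n$ pure strategies ("objects"), played without collusion; each player independently chooses an object (mixed strategies are allowed, Nash equilibria are in mixed strategies). The rules assign to every multiset $c$ of $m$ chosen objects a single winning object $\phi(c)\in c$; every player who chose $\phi(c)$ wins and every other player loses. If there are $m'$ winners, each winner receives payoff $\frac{m-m'}{m'}$ and each loser receives payoff $-1$. The imbalanced $(m,3)$-RPS has objects $R,P,S$ with the following rules: any multiset containing at least one $S$ and at least one $R$ is won by $R$; any multiset containing only $R$'s and $P$'s (with at least one of each) is won by $P$; any multiset containing only $P$'s and $S$'s (with at least one of each) is won by $S$; a multiset consisting of a single object type is won by that object. *)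

theory Defs
  imports Complex_Main "HOL-Library.Multiset" "HOL-Library.FuncSet"
begin

datatype obj = R | P | S

definition phi :: "obj multiset \<Rightarrow> obj" where
  "phi c = (if S \<in># c \<and> R \<in># c then R
            else if R \<in># c \<and> P \<in># c then P
            else if P \<in># c \<and> S \<in># c then S
            else the_elem (set_mset c))"

definition chosen :: "nat \<Rightarrow> (nat \<Rightarrow> obj) \<Rightarrow> obj multiset" where
  "chosen m s = image_mset s (mset_set {..<m})"

definition pure_profiles :: "nat \<Rightarrow> (nat \<Rightarrow> obj) set" where
  "pure_profiles m = PiE {..<m} (\<lambda>_. UNIV)"

definition payoff :: "nat \<Rightarrow> (nat \<Rightarrow> obj) \<Rightarrow> nat \<Rightarrow> real" where
  "payoff m s i = (let w = phi (chosen m s); m' = count (chosen m s) w in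
     if s i = w then (real m - real m') / real m' else -1)"

definition is_mixed :: "(obj \<Rightarrow> real) \<Rightarrow> bool" where
  "is_mixed q \<longleftrightarrow> (\<forall>x. q x \<ge> 0) \<and> (\<Sum>x\<in>UNIV. q x) = 1"

definition exp_payoff :: "nat \<Rightarrow> (nat \<Rightarrow> obj \<Rightarrow> real) \<Rightarrow> nat \<Rightarrow> real" where
  "exp_payoff m \<sigma> i = (\<Sum>s\<in>pure_profiles m. (\<Prod>j<m. \<sigma> j (s j)) * payoff m s i)"

definition nash_eq :: "nat \<Rightarrow> (nat \<Rightarrow> obj \<Rightarrow> real) \<Rightarrow> bool" where
  "nash_eq m \<sigma> \<longleftrightarrow> (\<forall>i<m. is_mixed (\<sigma> i)) \<and>
     (\<forall>i<m. \<forall>\<tau>. is_mixed \<tau> \<longrightarrow> exp_payoff m (\<sigma>(i := \<tau>)) i \<le> exp_payoff m \<sigma> i)"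

end

theory Submission
  imports Defs
begin


lemma UNIV_obj: "(UNIV::obj set) = {R,P,S}"
  using obj.exhaust by auto

lemma finite_obj[simp]: "finite (UNIV::obj set)"
  by (simp add: UNIV_obj)

lemma sum_obj: "(\<Sum>x\<in>UNIV. f x) = f R + f P + (f S :: real)"
  by (simp add: UNIV_obj)

definition W :: "nat \<Rightarrow> (nat \<Rightarrow> obj \<Rightarrow> real) \<Rightarrow> (nat \<Rightarrow> obj) \<Rightarrow> real" where
  "W m \<sigma> s = (\<Prod>j<m. \<sigma> j (s j))"

definition EE :: "nat \<Rightarrow> (nat \<Rightarrow> obj \<Rightarrow> real) \<Rightarrow> ((nat \<Rightarrow> obj) \<Rightarrow> real) \<Rightarrow> real" where
  "EE m \<sigma> F = (\<Sum>s\<in>pure_profiles m. W m \<sigma> s * F s)"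

lemma finite_pp[simp]: "finite (pure_profiles m)"
  unfolding pure_profiles_def by (intro finite_PiE) auto

lemma exp_payoff_EE: "exp_payoff m \<sigma> i = EE m \<sigma> (\<lambda>s. payoff m s i)"
  unfolding exp_payoff_def EE_def W_def by simp

lemma EE_prod:
  assumes T: "T \<subseteq> {..<m}" and sum1: "\<And>l. l < m \<Longrightarrow> (\<Sum>x\<in>UNIV. \<sigma> l x) = 1"
  shows "EE m \<sigma> (\<lambda>s. \<Prod>l\<in>T. g l (s l)) = (\<Prod>l\<in>T. \<Sum>x\<in>UNIV. \<sigma> l x * g l x)"
proof -
  define h where "h j x = \<sigma> j x * (if j \<in> T then g j x else 1)" for j x
  have fT: "finite T" using T finite_subset by blast
  have 1: "W m \<sigma> s * (\<Prod>l\<in>T. g l (s l)) = (\<Prod>j<m. h j (s j))" for s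
  proof -
    have "(\<Prod>l\<in>T. g l (s l)) = (\<Prod>j<m. if j \<in> T then g j (s j) else 1)"
      using T by (simp add: prod.If_cases Int_absorb1 inf.absorb2)
    then show ?thesis unfolding W_def h_def by (simp add: prod.distrib)
  qed
  have "EE m \<sigma> (\<lambda>s. \<Prod>l\<in>T. g l (s l)) = (\<Sum>s\<in>pure_profiles m. \<Prod>j<m. h j (s j))"
    unfolding EE_def using 1 by simp
  also have "\<dots> = (\<Prod>j<m. \<Sum>x\<in>UNIV. h j x)"
    unfolding pure_profiles_def by (rule prod_sum_PiE[symmetric]) auto
  also have "\<dots> = (\<Prod>j<m. if j \<in> T then (\<Sum>x\<in>UNIV. \<sigma> j x * g j x) else 1)"
    unfolding h_def by (intro prod.cong refl) (auto simp: sum1)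
  also have "\<dots> = (\<Prod>l\<in>T. \<Sum>x\<in>UNIV. \<sigma> l x * g l x)"
    using T by (simp add: prod.If_cases Int_absorb1 inf.absorb2)
  finally show ?thesis .
qed


lemma EE_add: "EE m \<sigma> (\<lambda>s. F s + G s) = EE m \<sigma> F + EE m \<sigma> G"
  unfolding EE_def by (simp add: distrib_left sum.distrib)

lemma EE_diff: "EE m \<sigma> (\<lambda>s. F s - G s) = EE m \<sigma> F - EE m \<sigma> G"
  unfolding EE_def by (simp add: right_diff_distrib sum_subtractf)

lemma EE_cmult: "EE m \<sigma> (\<lambda>s. c * F s) = c * EE m \<sigma> F"
  unfolding EE_def by (simp add: sum_distrib_left mult.left_commute)

lemma EE_sum: "EE m \<sigma> (\<lambda>s. \<Sum>l\<in>L. F l s) = (\<Sum>l\<in>L. EE m \<sigma> (F l))"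
  unfolding EE_def by (simp add: sum_distrib_left sum.swap[of _ L])

lemma EE_const:
  assumes sum1: "\<And>l. l < m \<Longrightarrow> (\<Sum>x\<in>UNIV. \<sigma> l x) = 1"
  shows "EE m \<sigma> (\<lambda>s. c) = c"
proof -
  have "EE m \<sigma> (\<lambda>s. c) = c * EE m \<sigma> (\<lambda>s. \<Prod>l\<in>{}. (\<lambda>l x. 1::real) l (s l))"
    using EE_cmult[of m \<sigma> c "\<lambda>s. 1"] by simp
  also have "\<dots> = c" using EE_prod[of "{}" m \<sigma>, OF _ sum1] by simp
  finally show ?thesis .
qed

lemma W_nz:
  assumes "W m \<sigma> s \<noteq> 0" "j < m" shows "\<sigma> j (s j) \<noteq> 0"
  using assms unfolding W_def by auto

lemma W_nonneg: "(\<And>j x. \<sigma> j x \<ge> 0) \<Longrightarrow> W m \<sigma> s \<ge> 0"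
  unfolding W_def by (simp add: prod_nonneg)

lemma EE_mono:
  assumes nn: "\<And>j x. j < m \<Longrightarrow> \<sigma> j x \<ge> 0"
    and le: "\<And>s. s \<in> pure_profiles m \<Longrightarrow> (\<And>j. j < m \<Longrightarrow> \<sigma> j (s j) \<noteq> 0) \<Longrightarrow> F s \<le> G s"
  shows "EE m \<sigma> F \<le> EE m \<sigma> G"
  unfolding EE_def
proof (rule sum_mono)
  fix s assume s: "s \<in> pure_profiles m"
  have W0: "W m \<sigma> s \<ge> 0" unfolding W_def by (rule prod_nonneg) (auto intro: nn)
  show "W m \<sigma> s * F s \<le> W m \<sigma> s * G s"
  proof (cases "W m \<sigma> s = 0")
    case True then show ?thesis by simp
  next
    case False
    then have "F s \<le> G s" using le[OF s] W_nz by blast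
    then show ?thesis using W0 by (simp add: mult_left_mono)
  qed
qed

lemma EE_cong:
  assumes eq: "\<And>s. s \<in> pure_profiles m \<Longrightarrow> (\<And>j. j < m \<Longrightarrow> \<sigma> j (s j) \<noteq> 0) \<Longrightarrow> F s = G s"
  shows "EE m \<sigma> F = EE m \<sigma> G"
  unfolding EE_def
proof (rule sum.cong[OF refl])
  fix s assume s: "s \<in> pure_profiles m"
  show "W m \<sigma> s * F s = W m \<sigma> s * G s"
  proof (cases "W m \<sigma> s = 0")
    case True then show ?thesis by simp
  next
    case False
    then have "F s = G s" using eq[OF s] W_nz by blast
    then show ?thesis by simp
  qed
qed

definition pure :: "obj \<Rightarrow> obj \<Rightarrow> real" where
  "pure x = (\<lambda>y. if y = x then 1 else 0)"

lemma is_mixed_pure: "is_mixed (pure x)"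
  unfolding is_mixed_def pure_def by simp

lemma W_upd:
  assumes "i < m"
  shows "W m (\<sigma>(i:=\<tau>)) s = \<tau> (s i) * (\<Prod>j\<in>{..<m}-{i}. \<sigma> j (s j))"
proof -
  have "W m (\<sigma>(i:=\<tau>)) s = (\<sigma>(i:=\<tau>)) i (s i) * (\<Prod>j\<in>{..<m}-{i}. (\<sigma>(i:=\<tau>)) j (s j))"
    unfolding W_def using assms by (simp add: prod.remove)
  also have "(\<Prod>j\<in>{..<m}-{i}. (\<sigma>(i:=\<tau>)) j (s j)) = (\<Prod>j\<in>{..<m}-{i}. \<sigma> j (s j))"
    by (intro prod.cong) auto
  finally show ?thesis by (metis fun_upd_same)
qed

lemma EE_upd:
  assumes "i < m"
  shows "EE m (\<sigma>(i:=\<tau>)) F = (\<Sum>x\<in>UNIV. \<tau> x * EE m (\<sigma>(i:=pure x)) F)"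
proof -
  let ?Q = "\<lambda>s. (\<Prod>j\<in>{..<m}-{i}. \<sigma> j (s j))"
  have "(\<Sum>x\<in>UNIV. \<tau> x * EE m (\<sigma>(i:=pure x)) F)
      = (\<Sum>x\<in>UNIV. \<Sum>s\<in>pure_profiles m. \<tau> x * (pure x (s i) * ?Q s * F s))"
    unfolding EE_def W_upd[OF assms] by (simp add: sum_distrib_left)
  also have "\<dots> = (\<Sum>s\<in>pure_profiles m. \<Sum>x\<in>UNIV. \<tau> x * (pure x (s i) * ?Q s * F s))"
    by (rule sum.swap)
  also have "\<dots> = (\<Sum>s\<in>pure_profiles m. \<tau> (s i) * ?Q s * F s)"
  proof (rule sum.cong[OF refl])
    fix s
    have "(\<Sum>x\<in>UNIV. \<tau> x * (pure x (s i) * ?Q s * F s)) = (\<Sum>x\<in>UNIV. if x = s i then \<tau> x * (?Q s * F s) else 0)"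
      by (intro sum.cong) (auto simp: pure_def)
    also have "\<dots> = \<tau> (s i) * (?Q s * F s)" by simp
    finally show "(\<Sum>x\<in>UNIV. \<tau> x * (pure x (s i) * ?Q s * F s)) = \<tau> (s i) * ?Q s * F s" by simp
  qed
  also have "\<dots> = EE m (\<sigma>(i:=\<tau>)) F"
    unfolding EE_def W_upd[OF assms] by simp
  finally show ?thesis by simp
qed

lemma phi_mem:
  assumes "c \<noteq> {#}" shows "phi c \<in># c"
proof (cases "S \<in># c \<and> R \<in># c")
  case True then show ?thesis by (simp add: phi_def)
next
  case F1: False
  show ?thesis
  proof (cases "R \<in># c \<and> P \<in># c")
    case True then show ?thesis using F1 by (simp add: phi_def)
  next
    case F2: False
    show ?thesis
    proof (cases "P \<in># c \<and> S \<in># c")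
      case True then show ?thesis using F1 F2 by (simp add: phi_def)
    next
      case F3: False
      obtain y where y: "y \<in># c" using assms by (meson multiset_nonemptyE)
      have "\<forall>z. z \<in># c \<longrightarrow> z = y"
      proof (intro allI impI)
        fix z assume z: "z \<in># c"
        show "z = y" using z y F1 F2 F3 by (cases z; cases y; blast)
      qed
      then have "set_mset c = {y}" using y by blast
      then show ?thesis using F1 F2 F3 by (simp add: phi_def)
    qed
  qed
qed

lemma count_chosen: "count (chosen m s) x = card {i. i < m \<and> s i = x}"
proof -
  have "count (chosen m s) x = card ({..<m} \<inter> s -` {x})"
    unfolding chosen_def by (simp add: count_image_mset Int_commute)
  also have "{..<m} \<inter> s -` {x} = {i. i < m \<and> s i = x}" by auto
  finally show ?thesis .
qed

lemma mem_chosen: "x \<in># chosen m s \<longleftrightarrow> (\<exists>i<m. s i = x)"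
  unfolding chosen_def by auto

lemma payoff_sum:
  assumes "m \<ge> 1" shows "(\<Sum>i<m. payoff m s i) = 0"
proof -
  define w where "w = phi (chosen m s)"
  define A where "A = {i. i < m \<and> s i = w}"
  define k where "k = card A"
  have "s 0 \<in># chosen m s" using assms unfolding mem_chosen by (intro exI[of _ 0]) auto
  then have ne: "chosen m s \<noteq> {#}" by auto
  have "w \<in># chosen m s" unfolding w_def using phi_mem[OF ne] .
  then obtain i0 where i0: "i0 < m" "s i0 = w" using mem_chosen by blast
  have finA: "finite A" unfolding A_def by auto
  have "i0 \<in> A" unfolding A_def using i0 by auto
  then have "A \<noteq> {}" by auto
  then have Ane: "k \<ge> 1" unfolding k_def using finA
    by (metis One_nat_def Suc_leI card_gt_0_iff)
  have AS: "A \<subseteq> {..<m}" unfolding A_def by auto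
  have Ale: "k \<le> m" unfolding k_def using card_mono[OF _ AS] by simp
  have cnt: "count (chosen m s) w = k" unfolding k_def A_def by (rule count_chosen)
  have cA: "{..<m} \<inter> {i. s i = w} = A" unfolding A_def by auto
  have cB: "card ({..<m} \<inter> - {i. s i = w}) = m - k"
  proof -
    have "{..<m} \<inter> - {i. s i = w} = {..<m} - A" unfolding A_def by auto
    then show ?thesis unfolding k_def using AS finA by (simp add: card_Diff_subset)
  qed
  have "(\<Sum>i<m. payoff m s i) = (\<Sum>i<m. if s i = w then (real m - real k) / real k else -1)"
    unfolding payoff_def Let_def cnt w_def[symmetric] by simp
  also have "\<dots> = (\<Sum>i\<in>{..<m} \<inter> {i. s i = w}. (real m - real k) / real k) + (\<Sum>i\<in>{..<m} \<inter> - {i. s i = w}. -1)"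
    by (rule sum.If_cases) simp
  also have "\<dots> = real k * ((real m - real k) / real k) - real (m - k)"
    unfolding cA by (simp add: cB k_def)
  also have "\<dots> = 0" using Ane Ale by (simp add: of_nat_diff)
  finally show ?thesis .
qed



lemma set_single: "x \<in># c \<Longrightarrow> (\<And>y. y \<in># c \<Longrightarrow> y = x) \<Longrightarrow> set_mset c = {x}"
  by blast

lemma phi_SR: "S \<in># c \<Longrightarrow> R \<in># c \<Longrightarrow> phi c = R"
  by (simp add: phi_def)

lemma phi_S_noR: assumes "S \<in># c" "R \<notin># c" shows "phi c = S"
proof (cases "P \<in># c")
  case True then show ?thesis using assms by (simp add: phi_def)
next
  case False
  have "set_mset c = {S}"
  proof (rule set_single[OF assms(1)])
    fix y assume "y \<in># c" then show "y = S" using assms False by (cases y) auto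
  qed
  then show ?thesis using assms False by (simp add: phi_def)
qed

lemma phi_P_noS: assumes "P \<in># c" "S \<notin># c" shows "phi c = P"
proof (cases "R \<in># c")
  case True then show ?thesis using assms by (simp add: phi_def)
next
  case False
  have "set_mset c = {P}"
  proof (rule set_single[OF assms(1)])
    fix y assume "y \<in># c" then show "y = P" using assms False by (cases y) auto
  qed
  then show ?thesis using assms False by (simp add: phi_def)
qed

lemma phi_R_only: assumes "R \<in># c" "S \<notin># c" "P \<notin># c" shows "phi c = R"
proof -
  have "set_mset c = {R}"
  proof (rule set_single[OF assms(1)])
    fix y assume "y \<in># c" then show "y = R" using assms by (cases y) auto
  qed
  then show ?thesis using assms by (simp add: phi_def)
qed

lemma obj_RP: "x \<noteq> S \<Longrightarrow> x \<noteq> R \<Longrightarrow> x = P"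
  by (cases x) auto

lemma pw_S:
  assumes m2: "m \<ge> 2" and i: "i < m" and si: "s i = S"
    and noS: "\<And>l. l < m \<Longrightarrow> l \<noteq> i \<Longrightarrow> s l \<noteq> S"
  shows "payoff m s i = real m * (\<Prod>l\<in>{..<m}-{i}. of_bool (s l = P)) - 1"
proof (cases "\<exists>l<m. l \<noteq> i \<and> s l = R")
  case True
  then obtain l where l: "l < m" "l \<noteq> i" "s l = R" by blast
  have "S \<in># chosen m s" using i si mem_chosen by blast
  moreover have "R \<in># chosen m s" using l mem_chosen by blast
  ultimately have "phi (chosen m s) = R" by (rule phi_SR)
  then have "payoff m s i = -1" unfolding payoff_def Let_def using si by simp
  moreover have "(\<Prod>l\<in>{..<m}-{i}. of_bool (s l = P)) = (0::real)"
    using l by (intro prod_zero bexI[of _ l]) auto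
  ultimately show ?thesis by simp
next
  case False
  then have allP: "\<And>l. l < m \<Longrightarrow> l \<noteq> i \<Longrightarrow> s l = P" using noS obj_RP by blast
  have "S \<in># chosen m s" using i si mem_chosen by blast
  moreover have "R \<notin># chosen m s" using False si mem_chosen by (metis obj.distinct(3))
  ultimately have ph: "phi (chosen m s) = S" by (rule phi_S_noR)
  have "{j. j < m \<and> s j = S} = {i}" using i si noS by auto
  then have cnt: "count (chosen m s) S = 1" by (simp add: count_chosen)
  have "payoff m s i = real m - 1" unfolding payoff_def Let_def ph cnt using si by simp
  moreover have "(\<Prod>l\<in>{..<m}-{i}. of_bool (s l = P)) = (1::real)"
    using allP by (intro prod.neutral) auto
  ultimately show ?thesis by simp
qed

lemma card_RP:
  assumes noS: "\<And>l. l < m \<Longrightarrow> s l \<noteq> S"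
  shows "card {l. l < m \<and> s l = P} + card {l. l < m \<and> s l = R} = m"
proof -
  have "{l. l < m \<and> s l = P} \<union> {l. l < m \<and> s l = R} = {..<m}"
    using noS obj_RP by auto
  moreover have "{l. l < m \<and> s l = P} \<inter> {l. l < m \<and> s l = R} = {}" by auto
  ultimately show ?thesis
    by (metis (no_types, lifting) card_Un_disjoint card_lessThan finite_Un finite_lessThan)
qed

lemma card_as_sum:
  fixes m :: nat and s :: "nat \<Rightarrow> obj"
  assumes "i < m" "s i \<noteq> x"
  shows "real (card {l. l < m \<and> s l = x}) = (\<Sum>l\<in>{..<m}-{i}. of_bool (s l = x))"
proof -
  have "(\<Sum>l\<in>{..<m}-{i}. of_bool (s l = x)) = real (card (({..<m}-{i}) \<inter> {l. s l = x}))"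
    by (subst sum_of_bool_eq) auto
  also have "({..<m}-{i}) \<inter> {l. s l = x} = {l. l < m \<and> s l = x}" using assms by auto
  finally show ?thesis by simp
qed

lemma pw_P:
  assumes i: "i < m" and si: "s i = P"
    and noS: "\<And>l. l < m \<Longrightarrow> s l \<noteq> S"
  shows "payoff m s i \<ge> (\<Sum>l\<in>{..<m}-{i}. of_bool (s l = R)) / real m"
proof -
  define NR where "NR = card {l. l < m \<and> s l = R}"
  define NP where "NP = card {l. l < m \<and> s l = P}"
  have sum: "NP + NR = m" unfolding NP_def NR_def by (rule card_RP) (use noS in auto)
  have "P \<in># chosen m s" using i si mem_chosen by blast
  moreover have "S \<notin># chosen m s" using noS mem_chosen by blast
  ultimately have ph: "phi (chosen m s) = P" by (rule phi_P_noS)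
  have cnt: "count (chosen m s) P = NP" unfolding NP_def by (simp add: count_chosen)
  have NPpos: "NP \<ge> 1"
  proof -
    have "i \<in> {l. l < m \<and> s l = P}" using i si by auto
    then have "{l. l < m \<and> s l = P} \<noteq> {}" by auto
    then show ?thesis unfolding NP_def
      by (metis One_nat_def Suc_leI card_gt_0_iff finite_Collect_conjI finite_Collect_less_nat)
  qed
  have pay: "payoff m s i = real NR / real NP"
    unfolding payoff_def Let_def ph cnt using si sum by (simp add: of_nat_diff flip: sum)
  have "real NR / real m \<le> real NR / real NP"
    using NPpos sum by (intro divide_left_mono) auto
  moreover have "real NR = (\<Sum>l\<in>{..<m}-{i}. of_bool (s l = R))"
    unfolding NR_def using card_as_sum[OF i] si by simp
  ultimately show ?thesis using pay by simp
qed

lemma pw_R: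
  assumes i: "i < m" and si: "s i = R"
    and noS: "\<And>l. l < m \<Longrightarrow> s l \<noteq> S"
  shows "payoff m s i \<le> 0"
proof (cases "P \<in># chosen m s")
  case True
  have "S \<notin># chosen m s" using noS mem_chosen by blast
  then have "phi (chosen m s) = P" using True phi_P_noS by blast
  then show ?thesis unfolding payoff_def Let_def using si by simp
next
  case False
  have R: "R \<in># chosen m s" using i si mem_chosen by blast
  have "S \<notin># chosen m s" using noS mem_chosen by blast
  then have ph: "phi (chosen m s) = R" using False R phi_R_only by blast
  have "{l. l < m \<and> s l = R} = {..<m}"
    using False noS mem_chosen obj_RP by blast
  then have "count (chosen m s) R = m" by (simp add: count_chosen)
  then show ?thesis unfolding payoff_def Let_def ph using si by simp
qed



lemma pw_jS:
  fixes m :: nat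
  assumes m2: "m \<ge> 2" and j: "j < m" and i0: "i0 < m" and ji: "j \<noteq> i0"
    and sj: "s j = S" and si0: "s i0 \<noteq> R"
    and noS: "\<And>l. l < m \<Longrightarrow> l \<noteq> j \<Longrightarrow> l \<noteq> i0 \<Longrightarrow> s l \<noteq> S"
  shows "payoff m s j = -1 + real m * (\<Prod>l\<in>{..<m}-{j,i0}. of_bool (s l = P))
            - real m / 2 * (of_bool (s i0 = S) * (\<Prod>l\<in>{..<m}-{j,i0}. of_bool (s l = P)))"
proof (cases "\<exists>l\<in>{..<m}-{j,i0}. s l = R")
  case True
  then obtain l where l: "l \<in> {..<m}-{j,i0}" "s l = R" by blast
  have "S \<in># chosen m s" using j sj mem_chosen by blast
  moreover have "R \<in># chosen m s" using l mem_chosen by blast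
  ultimately have "phi (chosen m s) = R" by (rule phi_SR)
  then have "payoff m s j = -1" unfolding payoff_def Let_def using sj by simp
  moreover have "(\<Prod>l\<in>{..<m}-{j,i0}. of_bool (s l = P)) = (0::real)"
    using l by (intro prod_zero bexI[of _ l]) auto
  ultimately show ?thesis by simp
next
  case False
  then have allP: "\<And>l. l \<in> {..<m}-{j,i0} \<Longrightarrow> s l = P" using noS obj_RP by blast
  have prod1: "(\<Prod>l\<in>{..<m}-{j,i0}. of_bool (s l = P)) = (1::real)"
    using allP by (intro prod.neutral) auto
  have "S \<in># chosen m s" using j sj mem_chosen by blast
  moreover have "R \<notin># chosen m s"
  proof
    assume "R \<in># chosen m s"
    then obtain l where "l < m" "s l = R" using mem_chosen by blast
    then show False using sj si0 allP by (metis DiffI insertE obj.distinct(1) lessThan_iff singletonD obj.distinct(3))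
  qed
  ultimately have ph: "phi (chosen m s) = S" by (rule phi_S_noR)
  show ?thesis
  proof (cases "s i0 = S")
    case True
    have "{l. l < m \<and> s l = S} = {j, i0}"
    proof (intro set_eqI iffI)
      fix x assume "x \<in> {l. l < m \<and> s l = S}"
      then show "x \<in> {j, i0}" using allP[of x] by (cases "x = j \<or> x = i0") auto
    next
      fix x assume "x \<in> {j, i0}" then show "x \<in> {l. l < m \<and> s l = S}" using j i0 sj True by auto
    qed
    then have cnt: "count (chosen m s) S = 2" using ji by (simp add: count_chosen)
    have "payoff m s j = (real m - 2) / 2" unfolding payoff_def Let_def ph cnt using sj by simp
    then show ?thesis using True prod1 by (simp add: field_simps)
  next
    case False
    have "{l. l < m \<and> s l = S} = {j}"
    proof (intro set_eqI iffI)
      fix x assume "x \<in> {l. l < m \<and> s l = S}"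
      then show "x \<in> {j}" using allP[of x] False by (cases "x = j \<or> x = i0") auto
    next
      fix x assume "x \<in> {j}" then show "x \<in> {l. l < m \<and> s l = S}" using j sj by auto
    qed
    then have cnt: "count (chosen m s) S = 1" by (simp add: count_chosen)
    have "payoff m s j = real m - 1" unfolding payoff_def Let_def ph cnt using sj by simp
    then show ?thesis using False prod1 by simp
  qed
qed

lemma tangent_ineq:
  fixes a N :: real
  assumes "a \<ge> 0" "N \<ge> 0"
  shows "(1 + 2*a - N) / (1+a)^2 \<le> 1 / (1 + N)"
proof -
  have "(1 + 2*a - N) * (1 + N) \<le> (1+a)^2"
  proof -
    have "(1+a)^2 - (1 + 2*a - N) * (1 + N) = (a - N)^2" by (simp add: power2_eq_square algebra_simps)
    then show ?thesis by (metis diff_ge_0_iff_ge zero_le_power2)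
  qed
  moreover have "(1+a)^2 > 0" using assms by simp
  moreover have "1 + N > 0" using assms by simp
  ultimately show ?thesis by (simp add: divide_simps mult.commute)
qed

lemma pw_jR:
  fixes m :: nat and a :: real
  assumes j: "j < m" and i0: "i0 < m" and ji: "j \<noteq> i0" and a: "a \<ge> 0"
    and sj: "s j = R" and si0: "s i0 \<noteq> R"
    and noS: "\<And>l. l < m \<Longrightarrow> l \<noteq> j \<Longrightarrow> l \<noteq> i0 \<Longrightarrow> s l \<noteq> S"
  shows "payoff m s j \<ge> -1 + of_bool (s i0 = S) * (real m / (1+a)^2)
            * (1 + 2*a - (\<Sum>l\<in>{..<m}-{j,i0}. of_bool (s l = R)))"
proof (cases "s i0 = S")
  case True
  define N where "N = card (({..<m}-{j,i0}) \<inter> {l. s l = R})"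
  have Nsum: "(\<Sum>l\<in>{..<m}-{j,i0}. of_bool (s l = R)) = real N"
    unfolding N_def by (subst sum_of_bool_eq) auto
  have "S \<in># chosen m s" using i0 True mem_chosen by blast
  moreover have "R \<in># chosen m s" using j sj mem_chosen by blast
  ultimately have ph: "phi (chosen m s) = R" by (rule phi_SR)
  have set: "{l. l < m \<and> s l = R} = insert j (({..<m}-{j,i0}) \<inter> {l. s l = R})"
    using j sj True by auto
  have "count (chosen m s) R = Suc N"
    unfolding count_chosen set N_def by (subst card_insert_disjoint) auto
  then have pay: "payoff m s j = (real m - (1 + real N)) / (1 + real N)"
    unfolding payoff_def Let_def ph using sj by simp
  have "(1 + 2*a - real N) / (1+a)^2 \<le> 1 / (1 + real N)"
    using tangent_ineq[OF a, of "real N"] by simp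
  then have "real m * ((1 + 2*a - real N) / (1+a)^2) \<le> real m * (1 / (1 + real N))"
    by (intro mult_left_mono) auto
  moreover have "(real m - (1 + real N)) / (1 + real N) = real m * (1 / (1 + real N)) - 1"
    by (simp add: field_simps)
  ultimately show ?thesis unfolding pay Nsum using True by simp
next
  case False
  have "P \<in># chosen m s" using i0 False si0 obj_RP mem_chosen by metis
  moreover have "S \<notin># chosen m s"
  proof
    assume "S \<in># chosen m s"
    then obtain l where "l < m" "s l = S" using mem_chosen by blast
    then show False using noS sj False by (metis obj.distinct(3))
  qed
  ultimately have "phi (chosen m s) = P" by (rule phi_P_noS)
  then have "payoff m s j = -1" unfolding payoff_def Let_def using sj by simp
  then show ?thesis using False by simp
qed



lemma sum_ofb: "(\<Sum>x\<in>UNIV. (q::obj\<Rightarrow>real) x * of_bool (x = (y::obj))) = q y"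
proof -
  have "(\<Sum>x\<in>UNIV. q x * of_bool (x = y)) = (\<Sum>x\<in>UNIV \<inter> {x. x = y}. q x)"
    by (rule sum_mult_of_bool_eq) simp
  also have "UNIV \<inter> {x. x = y} = {y}" by auto
  finally show ?thesis by simp
qed

lemma EE_prodP:
  assumes "T \<subseteq> {..<m}" "\<And>l. l < m \<Longrightarrow> (\<Sum>x\<in>UNIV. \<sigma> l x) = 1"
  shows "EE m \<sigma> (\<lambda>s. \<Prod>l\<in>T. of_bool (s l = y)) = (\<Prod>l\<in>T. \<sigma> l y)"
  using EE_prod[where g = "\<lambda>l x. of_bool (x = y)", OF assms] by (simp add: sum_ofb)

lemma EE_single:
  assumes "k < m" "\<And>l. l < m \<Longrightarrow> (\<Sum>x\<in>UNIV. \<sigma> l x) = 1"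
  shows "EE m \<sigma> (\<lambda>s. of_bool (s k = y)) = \<sigma> k y"
  using EE_prodP[of "{k}" m \<sigma> y] assms by simp

lemma EE_pair:
  assumes "k < m" "l < m" "k \<noteq> l" "\<And>l. l < m \<Longrightarrow> (\<Sum>x\<in>UNIV. \<sigma> l x) = 1"
  shows "EE m \<sigma> (\<lambda>s. of_bool (s k = y) * of_bool (s l = z)) = \<sigma> k y * \<sigma> l z"
proof -
  define g where "g i x = (if i = k then of_bool (x = y) else of_bool (x = z) :: real)" for i x
  have "EE m \<sigma> (\<lambda>s. \<Prod>i\<in>{k,l}. g i (s i)) = (\<Prod>i\<in>{k,l}. \<Sum>x\<in>UNIV. \<sigma> i x * g i x)"
    by (rule EE_prod) (use assms in auto)
  moreover have "(\<lambda>s. \<Prod>i\<in>{k,l}. g i (s i)) = (\<lambda>s. of_bool (s k = y) * of_bool (s l = z))"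
    using assms(3) by (auto simp: g_def)
  moreover have "(\<Prod>i\<in>{k,l}. \<Sum>x\<in>UNIV. \<sigma> i x * g i x) = \<sigma> k y * \<sigma> l z"
    using assms(3) by (simp add: g_def sum_ofb)
  ultimately show ?thesis by simp
qed

lemma EE_prod_ext:
  assumes "T \<subseteq> {..<m}" "k < m" "k \<notin> T" "\<And>l. l < m \<Longrightarrow> (\<Sum>x\<in>UNIV. \<sigma> l x) = 1"
  shows "EE m \<sigma> (\<lambda>s. of_bool (s k = y) * (\<Prod>l\<in>T. of_bool (s l = z))) = \<sigma> k y * (\<Prod>l\<in>T. \<sigma> l z)"
proof -
  define g where "g i x = (if i = k then of_bool (x = y) else of_bool (x = z) :: real)" for i x
  have fT: "finite T" using assms(1) finite_subset by blast
  have "EE m \<sigma> (\<lambda>s. \<Prod>i\<in>insert k T. g i (s i)) = (\<Prod>i\<in>insert k T. \<Sum>x\<in>UNIV. \<sigma> i x * g i x)"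
    by (rule EE_prod) (use assms in auto)
  moreover have "(\<lambda>s. \<Prod>i\<in>insert k T. g i (s i)) = (\<lambda>s. of_bool (s k = y) * (\<Prod>l\<in>T. of_bool (s l = z)))"
  proof
    fix s
    have "(\<Prod>i\<in>insert k T. g i (s i)) = g k (s k) * (\<Prod>i\<in>T. g i (s i))"
      using fT assms(3) by simp
    also have "(\<Prod>i\<in>T. g i (s i)) = (\<Prod>l\<in>T. of_bool (s l = z))"
      using assms(3) by (intro prod.cong) (auto simp: g_def)
    finally show "(\<Prod>i\<in>insert k T. g i (s i)) = of_bool (s k = y) * (\<Prod>l\<in>T. of_bool (s l = z))"
      by (simp add: g_def)
  qed
  moreover have "(\<Prod>i\<in>insert k T. \<Sum>x\<in>UNIV. \<sigma> i x * g i x) = \<sigma> k y * (\<Prod>l\<in>T. \<sigma> l z)"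
  proof -
    have "(\<Prod>i\<in>insert k T. \<Sum>x\<in>UNIV. \<sigma> i x * g i x) = (\<Sum>x\<in>UNIV. \<sigma> k x * g k x) * (\<Prod>i\<in>T. \<Sum>x\<in>UNIV. \<sigma> i x * g i x)"
      using fT assms(3) by simp
    also have "(\<Prod>i\<in>T. \<Sum>x\<in>UNIV. \<sigma> i x * g i x) = (\<Prod>l\<in>T. \<sigma> l z)"
    proof (rule prod.cong[OF refl])
      fix i assume "i \<in> T"
      then have "i \<noteq> k" using assms(3) by auto
      then show "(\<Sum>x\<in>UNIV. \<sigma> i x * g i x) = \<sigma> i z" by (simp add: g_def sum_ofb)
    qed
    finally show ?thesis by (simp add: g_def sum_ofb)
  qed
  ultimately show ?thesis by simp
qed

definition mixed_all :: "nat \<Rightarrow> (nat \<Rightarrow> obj \<Rightarrow> real) \<Rightarrow> bool" where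
  "mixed_all m \<sigma> \<longleftrightarrow> (\<forall>l<m. is_mixed (\<sigma> l))"

lemma dev_sum1:
  assumes "mixed_all m \<sigma>" "l < m"
  shows "(\<Sum>x\<in>UNIV. (\<sigma>(i:=pure y)) l x) = 1"
  using assms is_mixed_pure[of y] unfolding mixed_all_def is_mixed_def by (cases "l = i") auto

lemma dev_nonneg:
  assumes "mixed_all m \<sigma>" "l < m"
  shows "(\<sigma>(i:=pure y)) l x \<ge> 0"
  using assms unfolding mixed_all_def is_mixed_def pure_def by (cases "l = i") auto

lemma dev_supp:
  assumes "(\<sigma>(i:=pure y)) l x \<noteq> 0"
  shows "l = i \<Longrightarrow> x = y" "l \<noteq> i \<Longrightarrow> \<sigma> l x \<noteq> 0"
  using assms unfolding pure_def by (auto split: if_splits)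

lemma dev_other: "l \<noteq> i \<Longrightarrow> (\<sigma>(i:=pure y)) l = \<sigma> l" by simp



lemma EE_zero: "EE m \<sigma> (\<lambda>s. 0) = 0" unfolding EE_def by simp

lemma E_S:
  assumes m2: "m \<ge> 2" and i: "i < m" and mx: "mixed_all m \<sigma>"
    and noS: "\<And>l. l < m \<Longrightarrow> l \<noteq> i \<Longrightarrow> \<sigma> l S = 0"
  shows "exp_payoff m (\<sigma>(i:=pure S)) i = real m * (\<Prod>l\<in>{..<m}-{i}. \<sigma> l P) - 1"
proof -
  let ?s' = "\<sigma>(i:=pure S)"
  have s1: "\<And>l. l < m \<Longrightarrow> (\<Sum>x\<in>UNIV. ?s' l x) = 1" using dev_sum1[OF mx] by blast
  have "exp_payoff m ?s' i = EE m ?s' (\<lambda>s. real m * (\<Prod>l\<in>{..<m}-{i}. of_bool (s l = P)) - 1)"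
    unfolding exp_payoff_EE
  proof (rule EE_cong)
    fix s assume nz: "\<And>j. j < m \<Longrightarrow> ?s' j (s j) \<noteq> 0"
    have si: "s i = S" using dev_supp(1)[OF nz[OF i]] by simp
    have oth: "s l \<noteq> S" if "l < m" "l \<noteq> i" for l
      using dev_supp(2)[OF nz[OF that(1)] that(2)] noS[OF that] by auto
    show "payoff m s i = real m * (\<Prod>l\<in>{..<m}-{i}. of_bool (s l = P)) - 1"
      by (rule pw_S[of m i s, OF m2 i si oth])
  qed
  also have "\<dots> = real m * EE m ?s' (\<lambda>s. \<Prod>l\<in>{..<m}-{i}. of_bool (s l = P)) - 1"
    by (simp add: EE_diff EE_cmult EE_const[OF s1])
  also have "EE m ?s' (\<lambda>s. \<Prod>l\<in>{..<m}-{i}. of_bool (s l = P)) = (\<Prod>l\<in>{..<m}-{i}. ?s' l P)"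
    by (rule EE_prodP[OF _ s1]) auto
  also have "(\<Prod>l\<in>{..<m}-{i}. ?s' l P) = (\<Prod>l\<in>{..<m}-{i}. \<sigma> l P)"
    by (intro prod.cong) auto
  finally show ?thesis .
qed

lemma E_P:
  assumes i: "i < m" and mx: "mixed_all m \<sigma>"
    and noS: "\<And>l. l < m \<Longrightarrow> l \<noteq> i \<Longrightarrow> \<sigma> l S = 0"
  shows "exp_payoff m (\<sigma>(i:=pure P)) i \<ge> (\<Sum>l\<in>{..<m}-{i}. \<sigma> l R) / real m"
proof -
  let ?s' = "\<sigma>(i:=pure P)"
  have s1: "\<And>l. l < m \<Longrightarrow> (\<Sum>x\<in>UNIV. ?s' l x) = 1" using dev_sum1[OF mx] by blast
  have "EE m ?s' (\<lambda>s. (1 / real m) * (\<Sum>l\<in>{..<m}-{i}. of_bool (s l = R))) \<le> exp_payoff m ?s' i"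
    unfolding exp_payoff_EE
  proof (rule EE_mono)
    fix j x assume "j < m" then show "?s' j x \<ge> 0" by (rule dev_nonneg[OF mx])
  next
    fix s assume nz: "\<And>j. j < m \<Longrightarrow> ?s' j (s j) \<noteq> 0"
    have si: "s i = P" using dev_supp(1)[OF nz[OF i]] by simp
    have oth: "s l \<noteq> S" if "l < m" for l
    proof (cases "l = i")
      case True then show ?thesis using si by simp
    next
      case False then show ?thesis using dev_supp(2)[OF nz[OF that] False] noS[OF that False] by auto
    qed
    show "(1 / real m) * (\<Sum>l\<in>{..<m}-{i}. of_bool (s l = R)) \<le> payoff m s i"
      using pw_P[of i m s, OF i si oth] by simp
  qed
  also have "EE m ?s' (\<lambda>s. (1 / real m) * (\<Sum>l\<in>{..<m}-{i}. of_bool (s l = R)))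
      = (1 / real m) * (\<Sum>l\<in>{..<m}-{i}. EE m ?s' (\<lambda>s. of_bool (s l = R)))"
    by (simp only: EE_cmult EE_sum)
  also have "(\<Sum>l\<in>{..<m}-{i}. EE m ?s' (\<lambda>s. of_bool (s l = R))) = (\<Sum>l\<in>{..<m}-{i}. \<sigma> l R)"
  proof (rule sum.cong[OF refl])
    fix l assume l: "l \<in> {..<m}-{i}"
    then have "EE m ?s' (\<lambda>s. of_bool (s l = R)) = ?s' l R" by (intro EE_single[OF _ s1]) auto
    then show "EE m ?s' (\<lambda>s. of_bool (s l = R)) = \<sigma> l R" using l by simp
  qed
  finally have "(1 / real m) * (\<Sum>l\<in>{..<m}-{i}. \<sigma> l R) \<le> exp_payoff m ?s' i" .
  then show ?thesis by (subst (asm) mult.commute) (simp only: times_divide_eq_right mult_1_right)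
qed

lemma E_R:
  assumes i: "i < m" and mx: "mixed_all m \<sigma>"
    and noS: "\<And>l. l < m \<Longrightarrow> l \<noteq> i \<Longrightarrow> \<sigma> l S = 0"
  shows "exp_payoff m (\<sigma>(i:=pure R)) i \<le> 0"
proof -
  let ?s' = "\<sigma>(i:=pure R)"
  have "exp_payoff m ?s' i \<le> EE m ?s' (\<lambda>s. 0)"
    unfolding exp_payoff_EE
  proof (rule EE_mono)
    fix j x assume "j < m" then show "?s' j x \<ge> 0" by (rule dev_nonneg[OF mx])
  next
    fix s assume nz: "\<And>j. j < m \<Longrightarrow> ?s' j (s j) \<noteq> 0"
    have si: "s i = R" using dev_supp(1)[OF nz[OF i]] by simp
    have oth: "s l \<noteq> S" if "l < m" for l
    proof (cases "l = i")
      case True then show ?thesis using si by simp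
    next
      case False then show ?thesis using dev_supp(2)[OF nz[OF that] False] noS[OF that False] by auto
    qed
    show "payoff m s i \<le> 0" by (rule pw_R[of i m s, OF i si oth])
  qed
  then show ?thesis by (simp add: EE_zero)
qed



lemma E_jS:
  assumes m2: "m \<ge> 2" and j: "j < m" and i0: "i0 < m" and ji: "j \<noteq> i0"
    and mx: "mixed_all m \<sigma>"
    and noS: "\<And>l. l < m \<Longrightarrow> l \<noteq> i0 \<Longrightarrow> \<sigma> l S = 0" and noR: "\<sigma> i0 R = 0"
  shows "exp_payoff m (\<sigma>(j:=pure S)) j = -1 + real m * (\<Prod>l\<in>{..<m}-{j,i0}. \<sigma> l P)
            - real m / 2 * (\<sigma> i0 S * (\<Prod>l\<in>{..<m}-{j,i0}. \<sigma> l P))"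
proof -
  let ?s' = "\<sigma>(j:=pure S)"
  let ?O = "{..<m}-{j,i0}"
  have s1: "\<And>l. l < m \<Longrightarrow> (\<Sum>x\<in>UNIV. ?s' l x) = 1" using dev_sum1[OF mx] by blast
  have "exp_payoff m ?s' j = EE m ?s' (\<lambda>s. -1 + real m * (\<Prod>l\<in>?O. of_bool (s l = P))
            - real m / 2 * (of_bool (s i0 = S) * (\<Prod>l\<in>?O. of_bool (s l = P))))"
    unfolding exp_payoff_EE
  proof (rule EE_cong)
    fix s assume nz: "\<And>k. k < m \<Longrightarrow> ?s' k (s k) \<noteq> 0"
    have sj: "s j = S" using dev_supp(1)[OF nz[OF j]] by simp
    have si0: "s i0 \<noteq> R" using dev_supp(2)[OF nz[OF i0]] ji noR by auto
    have oth: "s l \<noteq> S" if "l < m" "l \<noteq> j" "l \<noteq> i0" for l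
      using dev_supp(2)[OF nz[OF that(1)] that(2)] noS[OF that(1) that(3)] by auto
    show "payoff m s j = -1 + real m * (\<Prod>l\<in>?O. of_bool (s l = P))
            - real m / 2 * (of_bool (s i0 = S) * (\<Prod>l\<in>?O. of_bool (s l = P)))"
      by (rule pw_jS[of m j i0 s, OF m2 j i0 ji sj si0 oth])
  qed
  also have "\<dots> = -1 + real m * EE m ?s' (\<lambda>s. \<Prod>l\<in>?O. of_bool (s l = P))
            - real m / 2 * EE m ?s' (\<lambda>s. of_bool (s i0 = S) * (\<Prod>l\<in>?O. of_bool (s l = P)))"
    by (simp only: EE_diff EE_add EE_cmult EE_const[OF s1])
  also have "EE m ?s' (\<lambda>s. \<Prod>l\<in>?O. of_bool (s l = P)) = (\<Prod>l\<in>?O. ?s' l P)"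
    by (rule EE_prodP[OF _ s1]) auto
  also have "EE m ?s' (\<lambda>s. of_bool (s i0 = S) * (\<Prod>l\<in>?O. of_bool (s l = P))) = ?s' i0 S * (\<Prod>l\<in>?O. ?s' l P)"
    by (rule EE_prod_ext[OF _ i0 _ s1]) auto
  also have "(\<Prod>l\<in>?O. ?s' l P) = (\<Prod>l\<in>?O. \<sigma> l P)"
    by (intro prod.cong) auto
  also have "?s' i0 S = \<sigma> i0 S" using ji by simp
  finally show ?thesis .
qed

lemma E_jR:
  assumes j: "j < m" and i0: "i0 < m" and ji: "j \<noteq> i0"
    and mx: "mixed_all m \<sigma>"
    and noS: "\<And>l. l < m \<Longrightarrow> l \<noteq> i0 \<Longrightarrow> \<sigma> l S = 0" and noR: "\<sigma> i0 R = 0"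
  shows "exp_payoff m (\<sigma>(j:=pure R)) j \<ge> -1 + \<sigma> i0 S * real m / (1 + (\<Sum>l\<in>{..<m}-{j,i0}. \<sigma> l R))"
proof -
  let ?s' = "\<sigma>(j:=pure R)"
  let ?O = "{..<m}-{j,i0}"
  define a where "a = (\<Sum>l\<in>?O. \<sigma> l R)"
  have a0: "a \<ge> 0" unfolding a_def using mx unfolding mixed_all_def is_mixed_def by (intro sum_nonneg) auto
  define c where "c = real m / (1+a)^2"
  have s1: "\<And>l. l < m \<Longrightarrow> (\<Sum>x\<in>UNIV. ?s' l x) = 1" using dev_sum1[OF mx] by blast
  have "EE m ?s' (\<lambda>s. -1 + c * (1 + 2*a) * of_bool (s i0 = S)
          - c * (\<Sum>l\<in>?O. of_bool (s i0 = S) * of_bool (s l = R))) \<le> exp_payoff m ?s' j"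
    unfolding exp_payoff_EE
  proof (rule EE_mono)
    fix k x assume "k < m" then show "?s' k x \<ge> 0" by (rule dev_nonneg[OF mx])
  next
    fix s assume nz: "\<And>k. k < m \<Longrightarrow> ?s' k (s k) \<noteq> 0"
    have sj: "s j = R" using dev_supp(1)[OF nz[OF j]] by simp
    have si0: "s i0 \<noteq> R" using dev_supp(2)[OF nz[OF i0]] ji noR by auto
    have oth: "s l \<noteq> S" if "l < m" "l \<noteq> j" "l \<noteq> i0" for l
      using dev_supp(2)[OF nz[OF that(1)] that(2)] noS[OF that(1) that(3)] by auto
    have pw: "payoff m s j \<ge> -1 + of_bool (s i0 = S) * (real m / (1+a)^2)
            * (1 + 2*a - (\<Sum>l\<in>?O. of_bool (s l = R)))"
      by (rule pw_jR[of j m i0 a s, OF j i0 ji a0 sj si0 oth])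
    have "-1 + of_bool (s i0 = S) * (real m / (1+a)^2) * (1 + 2*a - (\<Sum>l\<in>?O. of_bool (s l = R)))
        = -1 + c * (1 + 2*a) * of_bool (s i0 = S) - c * (\<Sum>l\<in>?O. of_bool (s i0 = S) * of_bool (s l = R))"
      unfolding c_def by (simp add: sum_distrib_left algebra_simps)
    then show "-1 + c * (1 + 2*a) * of_bool (s i0 = S)
          - c * (\<Sum>l\<in>?O. of_bool (s i0 = S) * of_bool (s l = R)) \<le> payoff m s j"
      using pw by simp
  qed
  also have "EE m ?s' (\<lambda>s. -1 + c * (1 + 2*a) * of_bool (s i0 = S)
          - c * (\<Sum>l\<in>?O. of_bool (s i0 = S) * of_bool (s l = R)))
      = -1 + c * (1 + 2*a) * EE m ?s' (\<lambda>s. of_bool (s i0 = S))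
          - c * (\<Sum>l\<in>?O. EE m ?s' (\<lambda>s. of_bool (s i0 = S) * of_bool (s l = R)))"
    by (simp only: EE_diff EE_add EE_cmult EE_const[OF s1] EE_sum)
  also have "EE m ?s' (\<lambda>s. of_bool (s i0 = S)) = \<sigma> i0 S"
  proof -
    have "EE m ?s' (\<lambda>s. of_bool (s i0 = S)) = ?s' i0 S" by (rule EE_single[OF i0 s1])
    then show ?thesis using ji by simp
  qed
  also have "(\<Sum>l\<in>?O. EE m ?s' (\<lambda>s. of_bool (s i0 = S) * of_bool (s l = R))) = (\<Sum>l\<in>?O. \<sigma> i0 S * \<sigma> l R)"
  proof (rule sum.cong[OF refl])
    fix l assume l: "l \<in> ?O"
    then have "EE m ?s' (\<lambda>s. of_bool (s i0 = S) * of_bool (s l = R)) = ?s' i0 S * ?s' l R"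
      by (intro EE_pair[OF i0 _ _ s1]) auto
    then show "EE m ?s' (\<lambda>s. of_bool (s i0 = S) * of_bool (s l = R)) = \<sigma> i0 S * \<sigma> l R"
      using l ji by simp
  qed
  also have "(\<Sum>l\<in>?O. \<sigma> i0 S * \<sigma> l R) = \<sigma> i0 S * a" unfolding a_def by (simp add: sum_distrib_left)
  also have "-1 + c * (1 + 2*a) * \<sigma> i0 S - c * (\<sigma> i0 S * a) = -1 + \<sigma> i0 S * real m / (1 + a)"
  proof -
    have pos: "1 + a > 0" using a0 by simp
    have h1: "-1 + c * (1 + 2*a) * \<sigma> i0 S - c * (\<sigma> i0 S * a) = -1 + \<sigma> i0 S * (c * (1+a))"
      by (simp add: algebra_simps)
    have h2: "c * (1+a) = real m / (1+a)" unfolding c_def using pos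
      by (simp add: power2_eq_square)
    show ?thesis unfolding h1 h2 by simp
  qed
  finally show ?thesis unfolding a_def .
qed



lemma E_pos_rho_ge1:
  fixes M n A \<rho> :: real
  assumes M: "M \<ge> 2" and n: "n = M - 1" and r1: "\<rho> \<ge> 1" and rn: "\<rho> \<le> n" and A0: "A \<ge> 0"
    and C3: "M + \<rho> \<le> M^2 * A"
  shows "A*(1+\<rho>)*(n-\<rho>) + 2*n*(n*A - 1) + A^2*(1+\<rho>)*(n+\<rho>) > 0"
proof -
  define B where "B = M^2 * A"
  have Mpos: "M^2 > 0" using M by simp
  have t1: "M^2 * (A*(1+\<rho>)*(n-\<rho>)) \<ge> 0" using A0 r1 rn by simp
  have "n * B \<ge> n * (M + \<rho>)" using C3 n M unfolding B_def by (intro mult_left_mono) auto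
  then have "n * B \<ge> n * M + n * \<rho>" by (simp add: distrib_left)
  moreover have "n * \<rho> \<ge> n * 1" using r1 n M by (intro mult_left_mono) auto
  moreover have "n * M = M^2 - M" unfolding n power2_eq_square by (simp add: algebra_simps)
  ultimately have "n * B - M^2 \<ge> -1" using n by linarith
  then have t2: "M^2 * (2*n*(n*A - 1)) \<ge> -2*n"
  proof -
    have "M^2 * (2*n*(n*A - 1)) = 2*n*(n*B - M^2)" unfolding B_def by (simp add: algebra_simps)
    also have "\<dots> \<ge> 2*n*(-1)" using \<open>n * B - M^2 \<ge> -1\<close> n M by (intro mult_left_mono) auto
    finally show ?thesis by simp
  qed
  have MA: "M * A \<ge> 1"
  proof -
    have "M * (M * A) \<ge> M * 1" using C3 r1 by (simp add: power2_eq_square algebra_simps)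
    then show ?thesis using M by (simp add: mult_le_cancel_left)
  qed
  have h1: "(M*A)^2 \<ge> 1" using MA by (simp add: one_le_power)
  have h2: "(1+\<rho>)*(n+\<rho>) \<ge> 2 * M" using r1 n
  proof -
    have "(1+\<rho>) \<ge> 2" "n + \<rho> \<ge> M" using r1 n by auto
    then show ?thesis using M by (metis mult_mono' le_numeral_extra(4) mult.commute zero_le_numeral dual_order.trans linorder_not_le mult_le_cancel_left2 order_less_le_trans mult_mono zero_le_one)
  qed
  have "1 * (2*M) \<le> (M*A)^2 * ((1+\<rho>)*(n+\<rho>))"
    by (rule mult_mono) (use h1 h2 M in auto)
  then have t3: "M^2 * (A^2*(1+\<rho>)*(n+\<rho>)) \<ge> 2*M" by (simp add: power_mult_distrib algebra_simps)
  have "M^2 * (A*(1+\<rho>)*(n-\<rho>) + 2*n*(n*A - 1) + A^2*(1+\<rho>)*(n+\<rho>)) > 0"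
    using t1 t2 t3 n by (simp add: distrib_left)
  then show ?thesis using Mpos by (simp add: zero_less_mult_iff)
qed


lemma E_pos_rho0:
  fixes M n A \<rho> :: real
  assumes M: "M \<ge> 2" and n: "n = M - 1" and r0: "\<rho> = 0" and C1: "1 - \<rho> \<le> A"
  shows "A*(1+\<rho>)*(n-\<rho>) + 2*n*(n*A - 1) + A^2*(1+\<rho>)*(n+\<rho>) > 0"
proof -
  have A1: "A \<ge> 1" using C1 r0 by simp
  have n1: "n \<ge> 1" using M n by simp
  have "A * n \<ge> 1 * n" using A1 n1 by (intro mult_right_mono) auto
  moreover have "n * A \<ge> n * 1" using A1 n1 by (intro mult_left_mono) auto
  moreover have "2*n*(n*A - 1) \<ge> 0"
  proof -
    have "n*A - 1 \<ge> 0" using \<open>n * A \<ge> n * 1\<close> n1 by linarith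
    then show ?thesis using n1 by (intro mult_nonneg_nonneg) auto
  qed
  moreover have "A^2 * n \<ge> 0" using n1 by simp
  ultimately have "A*n + 2*n*(n*A - 1) + A^2*n > 0" using n1 by linarith
  then show ?thesis using r0 by simp
qed

lemma E_pos_small:
  fixes M n A \<rho> :: real
  assumes M: "M \<ge> 3" and n: "n = M - 1" and r0: "\<rho> > 0" and r1: "\<rho> < 1" and A0: "A \<ge> 0"
    and C1: "1 - \<rho> \<le> A" and C3: "M + \<rho> \<le> M^2 * A"
  shows "A*(1+\<rho>)*(n-\<rho>) + 2*n*(n*A - 1) + A^2*(1+\<rho>)*(n+\<rho>) > 0"
proof -
  define B where "B = M^2 * A"
  define q where "q = (1+\<rho>)*(n-\<rho>)"
  have Mn: "M = n + 1" using n by simp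
  have n2: "n \<ge> 2" using M n by simp
  have q0: "q \<ge> 0" unfolding q_def using r0 r1 n2 by (intro mult_nonneg_nonneg) auto
  have BM: "B \<ge> M" using C3 r0 unfolding B_def by simp
  have f1: "M^2 * (A*(1+\<rho>)*(n-\<rho>)) = B * q" unfolding B_def q_def by (simp add: algebra_simps)
  have f2: "B * q \<ge> M * q" using BM q0 by (intro mult_right_mono) auto
  have "\<rho> * \<rho> \<le> \<rho> * 1" using r0 r1 by (intro mult_left_mono) auto
  then have "q \<ge> n + n*\<rho> - 2*\<rho>" unfolding q_def by (simp add: algebra_simps)
  then have f3: "M * q \<ge> M * (n + n*\<rho> - 2*\<rho>)" using M by (intro mult_left_mono) auto
  have "n * B \<ge> n * (M + \<rho>)" using C3 n2 unfolding B_def by (intro mult_left_mono) auto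
  then have "n * B - M^2 \<ge> n*\<rho> - M" unfolding Mn by (simp add: algebra_simps power2_eq_square)
  then have f4: "M^2 * (2*n*(n*A - 1)) \<ge> 2*n*(n*\<rho> - M)"
  proof -
    assume h: "n * B - M^2 \<ge> n*\<rho> - M"
    have "M^2 * (2*n*(n*A - 1)) = 2*n*(n*B - M^2)" unfolding B_def by (simp add: algebra_simps)
    also have "\<dots> \<ge> 2*n*(n*\<rho> - M)" using h n2 by (intro mult_left_mono) auto
    finally show ?thesis .
  qed
  have g1: "B * A \<ge> M * (1 - \<rho>)" using BM C1 M r1 by (intro mult_mono) auto
  have g2: "(1+\<rho>)*(n+\<rho>) \<ge> 1 * n" using r0 n2 by (intro mult_mono) auto
  have "(M * (1 - \<rho>)) * (1 * n) \<le> (B * A) * ((1+\<rho>)*(n+\<rho>))"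
  proof (rule mult_mono[OF g1 g2])
    have "M * (1 - \<rho>) \<ge> 0" using M r1 by simp
    then show "0 \<le> B * A" using g1 by linarith
    show "0 \<le> 1 * n" using n2 by simp
  qed
  then have f5: "M^2 * (A^2*(1+\<rho>)*(n+\<rho>)) \<ge> M * (1 - \<rho>) * n"
    unfolding B_def by (simp add: algebra_simps power2_eq_square)
  have iden: "M * (n + n*\<rho> - 2*\<rho>) + 2*n*(n*\<rho> - M) + M * (1 - \<rho>) * n = 2*\<rho>*(n*n - n - 1)"
    unfolding Mn by (simp add: algebra_simps)
  have "n * n \<ge> 2 * n" using n2 by (intro mult_right_mono) auto
  then have "n*n - n - 1 \<ge> 1" using n2 by linarith
  then have "2*\<rho>*(n*n - n - 1) \<ge> 2*\<rho>*1" using r0 by (intro mult_left_mono) auto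
  then have "M^2 * (A*(1+\<rho>)*(n-\<rho>) + 2*n*(n*A - 1) + A^2*(1+\<rho>)*(n+\<rho>)) > 0"
    using f1 f2 f3 f4 f5 iden r0 unfolding distrib_left by linarith
  then show ?thesis using M by (simp add: zero_less_mult_iff)
qed


lemma E_pos_M2:
  fixes A \<rho> :: real
  assumes r0: "\<rho> > 0" and r1: "\<rho> < 1" and A0: "A \<ge> 0"
    and C1: "1 - \<rho> \<le> A" and C3: "2 + \<rho> \<le> 4 * A"
  shows "A*(1+\<rho>)*(1-\<rho>) + 2*1*(1*A - 1) + A^2*(1+\<rho>)*(1+\<rho>) > 0"
proof -
  define u where "u = A*(1+\<rho>)"
  have sq: "A^2*(1+\<rho>)*(1+\<rho>) = u*u" unfolding u_def by (simp add: power2_eq_square algebra_simps)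
  show ?thesis
  proof (cases "\<rho> \<le> 2/5")
    case True
    have "\<rho> * \<rho> \<le> (2/5) * (2/5)" using True r0 by (intro mult_mono) auto
    have "u \<ge> (1-\<rho>)*(1+\<rho>)" unfolding u_def using C1 r0 by (intro mult_right_mono) auto
    then have u1: "u \<ge> 21/25" using \<open>\<rho> * \<rho> \<le> (2/5) * (2/5)\<close> by (simp add: algebra_simps)
    have "u*u \<ge> (21/25)*(21/25)" using u1 by (intro mult_mono) auto
    then have "u*u \<ge> 441/625" by simp
    moreover have "u*(1-\<rho>) \<ge> (21/25)*(1-\<rho>)" using u1 r1 by (intro mult_right_mono) auto
    moreover have "A*(1+\<rho>)*(1-\<rho>) = u*(1-\<rho>)" unfolding u_def by simp
    moreover have key: "0 < w + 2*1*(1*A - 1) + v" if "21/25*(1-\<rho>) \<le> w" "441/625 \<le> v" for w v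
      using that C1 True by argo
    ultimately show ?thesis using sq by (simp only:)
  next
    case F: False
    show ?thesis
    proof (cases "\<rho> \<le> 7/10")
      case True
      have A35: "A \<ge> 3/5" using C3 F by simp
      have "\<rho> * \<rho> \<le> (7/10) * (7/10)" using True r0 by (intro mult_mono) auto
      then have "1 - \<rho>*\<rho> \<ge> 51/100" by simp
      then have "A * (1 - \<rho>*\<rho>) \<ge> (3/5) * (51/100)" using A35 by (intro mult_mono) auto
      then have "A * (1 - \<rho>*\<rho>) \<ge> 153/500" by simp
      moreover have "A*(1+\<rho>)*(1-\<rho>) = A * (1 - \<rho>*\<rho>)" by (simp add: algebra_simps)
      moreover have u1: "u \<ge> 21/25"
      proof -
        have "A*(1+\<rho>) \<ge> (3/5)*(7/5)" using A35 F by (intro mult_mono) auto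
        then show ?thesis unfolding u_def by simp
      qed
      moreover have "u*u \<ge> 441/625"
      proof -
        have "u*u \<ge> (21/25)*(21/25)" using u1 by (intro mult_mono) auto
        then show ?thesis by simp
      qed
      moreover have key: "0 < p + 2*1*(1*A - 1) + q" if "153/500 \<le> p" "441/625 \<le> q" for p q
        using that C3 F by argo
      ultimately show ?thesis using sq by (simp only:)
    next
      case F2: False
      have A0': "A \<ge> 27/40" using C3 F2 by simp
      have "1 - \<rho>*\<rho> \<ge> 0" using r0 r1 by (simp add: mult_le_one)
      then have "A * (1 - \<rho>*\<rho>) \<ge> 0" using A0 by simp
      moreover have "A*(1+\<rho>)*(1-\<rho>) = A * (1 - \<rho>*\<rho>)" by (simp add: algebra_simps)
      moreover have u1: "u \<ge> 459/400"
      proof -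
        have "A*(1+\<rho>) \<ge> (27/40)*(17/10)" using A0' F2 by (intro mult_mono) auto
        then show ?thesis unfolding u_def by simp
      qed
      moreover have "u*u \<ge> 13/10"
      proof -
        have "u*u \<ge> (459/400)*(459/400)" using u1 by (intro mult_mono) auto
        then show ?thesis by simp
      qed
      moreover have key: "0 < p + 2*1*(1*A - 1) + q" if "0 \<le> p" "13/10 \<le> q" for p q
        using that C3 F2 by argo
      ultimately show ?thesis using sq by (simp only:)
    qed
  qed
qed

lemma final_contra:
  fixes M n A \<rho> s :: real
  assumes M: "M \<ge> 2" and M23: "M = 2 \<or> M \<ge> 3" and n: "n = M - 1" and r0: "0 \<le> \<rho>" and rn: "\<rho> \<le> n"
    and A0: "0 \<le> A" and C1: "1 - \<rho> \<le> A" and C3: "M + \<rho> \<le> M^2 * A" and s0: "s \<ge> 0"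
    and H4: "1 - M*A \<ge> M*A*(1 - s/2)*(n+\<rho>) - n"
    and H5: "1 - M*A \<ge> n*(s*M/(1+\<rho>)) - n"
  shows False
proof -
  define E where "E = A*(1+\<rho>)*(n-\<rho>) + 2*n*(n*A - 1) + A^2*(1+\<rho>)*(n+\<rho>)"
  have Epos: "E > 0"
  proof (cases "\<rho> \<ge> 1")
    case True then show ?thesis unfolding E_def using E_pos_rho_ge1[OF M n True rn A0 C3] by simp
  next
    case F1: False
    show ?thesis
    proof (cases "\<rho> = 0")
      case True then show ?thesis unfolding E_def using E_pos_rho0[OF M n True C1] by simp
    next
      case F2: False
      then have rp: "\<rho> > 0" using r0 by simp
      show ?thesis
      proof (cases "M \<ge> 3")
        case True then show ?thesis unfolding E_def using E_pos_small[OF True n rp _ A0 C1 C3] F1 by simp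
      next
        case False
        then have M2: "M = 2" using M23 by simp
        then have n1: "n = 1" using n by simp
        have "2 + \<rho> \<le> 4 * A" using C3 M2 by simp
        then show ?thesis unfolding E_def n1 using E_pos_M2[OF rp _ A0 C1] F1 by simp
      qed
    qed
  qed
  have Mp: "M > 0" using M by simp
  define Y where "Y = A*(n+\<rho>)"
  have Y0: "Y \<ge> 0" unfolding Y_def using A0 r0 n M by simp
  have e1: "M*(1-A) = 1 - M*A + n" using n by (simp add: algebra_simps)
  have e2: "M*(A*(1 - s/2)*(n+\<rho>)) = M*A*(1 - s/2)*(n+\<rho>)" by simp
  have "M*(1 - A) \<ge> M*(A*(1 - s/2)*(n+\<rho>))" using H4 unfolding e1 e2 by linarith
  then have k4: "1 - A \<ge> A*(1 - s/2)*(n+\<rho>)" using Mp by (simp add: mult_le_cancel_left)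
  have e3: "M*(n*s/(1+\<rho>)) = n*(s*M/(1+\<rho>))" by simp
  have "M*(1 - A) \<ge> M*(n*s/(1+\<rho>))" using H5 unfolding e1 e3 by linarith
  then have "1 - A \<ge> n*s/(1+\<rho>)" using mult_le_cancel_left_pos[OF Mp] by blast
  then have k5: "(1-A)*(1+\<rho>) \<ge> n*s" using r0 by (simp add: divide_le_eq mult.commute)
  define X where "X = A*(M+\<rho>) - 1"
  have i1: "A*(1 - s/2)*(n+\<rho>) = Y - s/2*Y" unfolding Y_def by (simp add: algebra_simps)
  have i2: "X = A + Y - 1" unfolding X_def Y_def n by (simp add: algebra_simps)
  have "X \<le> s/2 * Y" using k4 unfolding i1 i2 by linarith
  then have "2*n*X \<le> 2*n*(s/2*Y)" using n M by (intro mult_left_mono) auto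
  also have "2*n*(s/2*Y) = (n*s)*Y" by simp
  also have "\<dots> \<le> ((1-A)*(1+\<rho>))*Y" using k5 Y0 by (intro mult_right_mono) auto
  finally have "2*n*X - ((1-A)*(1+\<rho>))*Y \<le> 0" by simp
  moreover have "E = 2*n*X - ((1-A)*(1+\<rho>))*Y"
    unfolding E_def X_def Y_def n by (simp add: algebra_simps power2_eq_square)
  ultimately show False using Epos by simp
qed



lemma ne_mixed: "nash_eq m \<sigma> \<Longrightarrow> mixed_all m \<sigma>"
  unfolding nash_eq_def mixed_all_def by blast

lemma ne_dev: "nash_eq m \<sigma> \<Longrightarrow> i < m \<Longrightarrow> exp_payoff m (\<sigma>(i:=pure x)) i \<le> exp_payoff m \<sigma> i"
  unfolding nash_eq_def using is_mixed_pure by blast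

lemma ne_supp:
  assumes ne: "nash_eq m \<sigma>" and i: "i < m" and pos: "\<sigma> i x > 0"
  shows "exp_payoff m (\<sigma>(i:=pure x)) i = exp_payoff m \<sigma> i"
proof -
  define v where "v = exp_payoff m \<sigma> i"
  define u where "u y = exp_payoff m (\<sigma>(i:=pure y)) i" for y
  have mx: "is_mixed (\<sigma> i)" using ne i unfolding nash_eq_def by blast
  have s1: "(\<Sum>y\<in>UNIV. \<sigma> i y) = 1" and nn: "\<And>y. \<sigma> i y \<ge> 0" using mx unfolding is_mixed_def by auto
  have "v = EE m (\<sigma>(i := \<sigma> i)) (\<lambda>s. payoff m s i)" unfolding v_def exp_payoff_EE by simp
  also have "\<dots> = (\<Sum>y\<in>UNIV. \<sigma> i y * u y)" unfolding u_def exp_payoff_EE by (rule EE_upd[OF i])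
  finally have vu: "v = (\<Sum>y\<in>UNIV. \<sigma> i y * u y)" .
  have "(\<Sum>y\<in>UNIV. \<sigma> i y * (v - u y)) = v * (\<Sum>y\<in>UNIV. \<sigma> i y) - (\<Sum>y\<in>UNIV. \<sigma> i y * u y)"
    by (simp add: right_diff_distrib sum_subtractf sum_distrib_left mult.commute)
  also have "\<dots> = 0" using s1 vu by simp
  finally have z: "(\<Sum>y\<in>UNIV. \<sigma> i y * (v - u y)) = 0" .
  have tn: "\<forall>y\<in>UNIV. \<sigma> i y * (v - u y) \<ge> 0"
  proof
    fix y
    have "u y \<le> v" unfolding u_def v_def by (rule ne_dev[OF ne i])
    then show "\<sigma> i y * (v - u y) \<ge> 0" using nn[of y] by simp
  qed
  have "\<sigma> i x * (v - u x) = 0" using z tn sum_nonneg_eq_0_iff[of UNIV "\<lambda>y. \<sigma> i y * (v - u y)"] by simp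
  then show ?thesis using pos unfolding u_def v_def by simp
qed

lemma zero_sum:
  assumes "m \<ge> 1" shows "(\<Sum>i<m. exp_payoff m \<sigma> i) = 0"
proof -
  have "(\<Sum>i<m. exp_payoff m \<sigma> i) = EE m \<sigma> (\<lambda>s. \<Sum>i<m. payoff m s i)"
    unfolding exp_payoff_EE by (simp only: EE_sum)
  also have "\<dots> = EE m \<sigma> (\<lambda>s. 0)" using payoff_sum[OF assms] by simp
  also have "\<dots> = 0" by (rule EE_zero)
  finally show ?thesis .
qed

lemma weier:
  fixes r :: "nat \<Rightarrow> real"
  assumes "finite J" "\<And>l. l \<in> J \<Longrightarrow> 0 \<le> r l \<and> r l \<le> 1"
  shows "1 - (\<Sum>l\<in>J. r l) \<le> (\<Prod>l\<in>J. (1 - r l))"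
  using assms
proof (induction J rule: finite_induct)
  case empty then show ?case by simp
next
  case (insert x F)
  have IH: "1 - (\<Sum>l\<in>F. r l) \<le> (\<Prod>l\<in>F. (1 - r l))" using insert by auto
  have rx: "0 \<le> r x" "r x \<le> 1" using insert.prems by auto
  have F0: "0 \<le> (\<Sum>l\<in>F. r l)" using insert.prems by (intro sum_nonneg) auto
  have "(1 - r x) * (1 - (\<Sum>l\<in>F. r l)) \<le> (1 - r x) * (\<Prod>l\<in>F. (1 - r l))"
    using IH rx by (intro mult_left_mono) auto
  moreover have "(1 - r x) * (1 - (\<Sum>l\<in>F. r l)) \<ge> 1 - r x - (\<Sum>l\<in>F. r l)"
  proof -
    have "r x * (\<Sum>l\<in>F. r l) \<ge> 0" using rx F0 by simp
    then show ?thesis by (simp add: algebra_simps)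
  qed
  ultimately show ?case using insert by simp
qed



theorem mainTheorem4:
  fixes m :: nat and \<sigma> :: "nat \<Rightarrow> obj \<Rightarrow> real"
  assumes "2 \<le> m" and "m < 50" and "nash_eq m \<sigma>"
  shows "2 \<le> card {i. i < m \<and> \<sigma> i S > 0}"
proof (rule ccontr)
  assume contra: "\<not> 2 \<le> card {i. i < m \<and> \<sigma> i S > 0}"
  note m2 = assms(1) and ne = assms(3)
  define Sset where "Sset = {i. i < m \<and> \<sigma> i S > 0}"
  have finS: "finite Sset" unfolding Sset_def by auto
  have cS: "card Sset \<le> 1" using contra unfolding Sset_def by simp
  have mx: "mixed_all m \<sigma>" by (rule ne_mixed[OF ne])
  have nn: "\<And>l x. l < m \<Longrightarrow> \<sigma> l x \<ge> 0" using mx unfolding mixed_all_def is_mixed_def by blast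
  have sm: "\<And>l. l < m \<Longrightarrow> \<sigma> l R + \<sigma> l P + \<sigma> l S = 1"
    using mx unfolding mixed_all_def is_mixed_def sum_obj by blast
  have m1: "m \<ge> 1" using m2 by simp
  define M where "M = real m"
  have M2: "M \<ge> 2" unfolding M_def using m2 by simp
  have M23: "M = 2 \<or> M \<ge> 3" unfolding M_def using m2 by auto
  consider (empty) "Sset = {}" | (single) i0 where "Sset = {i0}"
    using cS finS by (metis card_0_eq card_1_singletonE le_antisym less_one not_le)
  then show False
  proof cases
    case empty
    have noS: "\<And>l. l < m \<Longrightarrow> \<sigma> l S = 0"
    proof -
      fix l assume l: "l < m"
      then have "\<not> \<sigma> l S > 0" using empty unfolding Sset_def by auto
      then show "\<sigma> l S = 0" using nn[OF l, of S] by simp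
    qed
    have pos: "exp_payoff m \<sigma> i > 0" if i: "i < m" for i
    proof -
      define \<rho> where "\<rho> = (\<Sum>l\<in>{..<m}-{i}. \<sigma> l R)"
      have r0: "\<rho> \<ge> 0" unfolding \<rho>_def using nn by (intro sum_nonneg) auto
      have h1: "exp_payoff m \<sigma> i \<ge> \<rho> / M"
        using ne_dev[OF ne i, of P] E_P[OF i mx noS] unfolding \<rho>_def M_def by linarith
      have h2: "exp_payoff m \<sigma> i \<ge> M * (\<Prod>l\<in>{..<m}-{i}. \<sigma> l P) - 1"
        using ne_dev[OF ne i, of S] E_S[OF m2 i mx noS] unfolding M_def by linarith
      have "(\<Prod>l\<in>{..<m}-{i}. \<sigma> l P) = (\<Prod>l\<in>{..<m}-{i}. 1 - \<sigma> l R)"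
        using sm noS by (intro prod.cong) (auto simp: algebra_simps)
      also have "\<dots> \<ge> 1 - \<rho>" unfolding \<rho>_def
        using nn sm noS by (intro weier) (auto, metis add.commute add_increasing2 le_add_same_cancel1)
      finally have h3: "(\<Prod>l\<in>{..<m}-{i}. \<sigma> l P) \<ge> 1 - \<rho>" .
      show ?thesis
      proof (cases "\<rho> > 0")
        case True then show ?thesis using h1 M2 by (smt (verit) divide_pos_pos)
      next
        case False
        then have "\<rho> = 0" using r0 by simp
        then have "(\<Prod>l\<in>{..<m}-{i}. \<sigma> l P) \<ge> 1" using h3 by simp
        then have "M * (\<Prod>l\<in>{..<m}-{i}. \<sigma> l P) \<ge> M * 1" using M2 by (intro mult_left_mono) auto
        then show ?thesis using h2 M2 by linarith
      qed
    qed
    have "(0::nat) \<in> {..<m}" using m1 by simp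
    then have "{..<m} \<noteq> {}" by blast
    then have "(\<Sum>i<m. exp_payoff m \<sigma> i) > 0" using pos by (intro sum_pos) auto
    then show False using zero_sum[OF m1, of \<sigma>] by simp
  next
    case single
    then have i0: "i0 < m" and s0: "\<sigma> i0 S > 0" unfolding Sset_def by auto
    have noS: "\<And>l. l < m \<Longrightarrow> l \<noteq> i0 \<Longrightarrow> \<sigma> l S = 0"
    proof -
      fix l assume l: "l < m" "l \<noteq> i0"
      then have "\<not> \<sigma> l S > 0" using single unfolding Sset_def by auto
      then show "\<sigma> l S = 0" using nn[OF l(1), of S] by simp
    qed
    define J where "J = {..<m} - {i0}"
    define A where "A = (\<Prod>l\<in>J. \<sigma> l P)"
    define \<rho> where "\<rho> = (\<Sum>l\<in>J. \<sigma> l R)"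
    define s where "s = \<sigma> i0 S"
    define v0 where "v0 = exp_payoff m \<sigma> i0"
    define n where "n = M - 1"
    have finJ: "finite J" unfolding J_def by auto
    have cJ: "real (card J) = n" unfolding J_def n_def M_def using i0 m1 by (simp add: of_nat_diff)
    have rl: "\<And>l. l \<in> J \<Longrightarrow> 0 \<le> \<sigma> l R \<and> \<sigma> l R \<le> 1"
    proof -
      fix l assume "l \<in> J"
      then have l: "l < m" "l \<noteq> i0" unfolding J_def by auto
      show "0 \<le> \<sigma> l R \<and> \<sigma> l R \<le> 1" using nn[OF l(1), of R] nn[OF l(1), of P] sm[OF l(1)] noS[OF l] by simp
    qed
    have pl: "\<And>l. l \<in> J \<Longrightarrow> \<sigma> l P = 1 - \<sigma> l R"
    proof -
      fix l assume "l \<in> J"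
      then have l: "l < m" "l \<noteq> i0" unfolding J_def by auto
      show "\<sigma> l P = 1 - \<sigma> l R" using sm[OF l(1)] noS[OF l] by simp
    qed
    have r0: "\<rho> \<ge> 0" unfolding \<rho>_def using rl by (intro sum_nonneg) auto
    have rn: "\<rho> \<le> n"
    proof -
      have "\<rho> \<le> (\<Sum>l\<in>J. 1)" unfolding \<rho>_def using rl by (intro sum_mono) auto
      then show ?thesis using cJ by simp
    qed
    have A0: "A \<ge> 0" unfolding A_def using rl pl by (intro prod_nonneg) auto
    have C1: "1 - \<rho> \<le> A"
    proof -
      have "A = (\<Prod>l\<in>J. 1 - \<sigma> l R)" unfolding A_def using pl by (intro prod.cong) auto
      then show ?thesis unfolding \<rho>_def using weier[OF finJ rl] by simp
    qed
    have v0eq: "v0 = M * A - 1"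
      using ne_supp[OF ne i0 s0] E_S[OF m2 i0 mx noS] unfolding v0_def M_def A_def J_def by simp
    have v0P: "v0 \<ge> \<rho> / M"
      using ne_dev[OF ne i0, of P] E_P[OF i0 mx noS] unfolding v0_def M_def \<rho>_def J_def by linarith
    have s1: "s \<le> 1" unfolding s_def using sm[OF i0] nn[OF i0, of R] nn[OF i0, of P] by simp
    have sn: "s \<ge> 0" unfolding s_def using s0 by simp
    have noR: "\<sigma> i0 R = 0"
    proof (rule ccontr)
      assume "\<sigma> i0 R \<noteq> 0"
      then have "\<sigma> i0 R > 0" using nn[OF i0, of R] by simp
      then have "v0 \<le> 0" using ne_supp[OF ne i0] E_R[OF i0 mx noS] unfolding v0_def by metis
      then have "\<rho> / M \<le> 0" using v0P by simp
      then have "\<rho> \<le> 0" using M2 by (simp add: divide_le_0_iff)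
      then have "A \<ge> 1" using C1 by simp
      then have "M * A \<ge> M * 1" using M2 by (intro mult_left_mono) auto
      then show False using v0eq \<open>v0 \<le> 0\<close> M2 by linarith
    qed
    have vS: "exp_payoff m \<sigma> j \<ge> M * (1 - s/2) * A * (1 + \<sigma> j R) - 1" if jJ: "j \<in> J" for j
    proof -
      have j: "j < m" "j \<noteq> i0" using jJ unfolding J_def by auto
      define C where "C = (\<Prod>l\<in>{..<m}-{j,i0}. \<sigma> l P)"
      have JC: "J - {j} = {..<m}-{j,i0}" unfolding J_def by auto
      have AC: "A = \<sigma> j P * C" unfolding A_def C_def using finJ jJ JC by (simp add: prod.remove)
      have C0: "C \<ge> 0" unfolding C_def using nn by (intro prod_nonneg) auto
      have "A * (1 + \<sigma> j R) = (1 - \<sigma> j R * \<sigma> j R) * C" unfolding AC pl[OF jJ] by (simp add: algebra_simps)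
      also have "\<dots> \<le> 1 * C" using C0 by (intro mult_right_mono) auto
      finally have AC2: "A * (1 + \<sigma> j R) \<le> C" by simp
      have K0: "M * (1 - s/2) \<ge> 0" using M2 s1 by simp
      have "M * (1 - s/2) * (A * (1 + \<sigma> j R)) \<le> M * (1 - s/2) * C" using AC2 K0 by (intro mult_left_mono) auto
      moreover have "exp_payoff m \<sigma> j \<ge> -1 + M * C - M / 2 * (s * C)"
        using ne_dev[OF ne j(1), of S] E_jS[OF m2 j(1) i0 j(2) mx noS noR] unfolding M_def C_def s_def by linarith
      moreover have "-1 + M * C - M / 2 * (s * C) = M * (1 - s/2) * C - 1" by (simp add: algebra_simps)
      ultimately show ?thesis by (simp add: mult.assoc)
    qed
    have vR: "exp_payoff m \<sigma> j \<ge> -1 + s * M / (1 + \<rho>)" if jJ: "j \<in> J" for j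
    proof -
      have j: "j < m" "j \<noteq> i0" using jJ unfolding J_def by auto
      define a where "a = (\<Sum>l\<in>{..<m}-{j,i0}. \<sigma> l R)"
      have JC: "J - {j} = {..<m}-{j,i0}" unfolding J_def by auto
      have "\<rho> = \<sigma> j R + a" unfolding \<rho>_def a_def using finJ jJ JC by (simp add: sum.remove)
      then have aR: "a \<le> \<rho>" using rl[OF jJ] by simp
      have a0: "a \<ge> 0" unfolding a_def using nn by (intro sum_nonneg) auto
      have "s * M / (1 + \<rho>) \<le> s * M / (1 + a)"
        using aR a0 sn M2 by (intro divide_left_mono) auto
      moreover have "exp_payoff m \<sigma> j \<ge> -1 + s * M / (1 + a)"
        using ne_dev[OF ne j(1), of R] E_jR[OF j(1) i0 j(2) mx noS noR] unfolding M_def a_def s_def by linarith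
      ultimately show ?thesis by linarith
    qed
    have zs: "v0 + (\<Sum>j\<in>J. exp_payoff m \<sigma> j) = 0"
    proof -
      have "(\<Sum>i<m. exp_payoff m \<sigma> i) = exp_payoff m \<sigma> i0 + (\<Sum>j\<in>J. exp_payoff m \<sigma> j)"
        unfolding J_def using i0 by (simp add: sum.remove)
      then show ?thesis using zero_sum[OF m1, of \<sigma>] unfolding v0_def by simp
    qed
    define K where "K = M * (1 - s/2) * A"
    have H4: "1 - M*A \<ge> M*A*(1 - s/2)*(n+\<rho>) - n"
    proof -
      have "(\<Sum>j\<in>J. exp_payoff m \<sigma> j) \<ge> (\<Sum>j\<in>J. K * (1 + \<sigma> j R) - 1)"
        using vS unfolding K_def by (intro sum_mono) auto
      also have "(\<Sum>j\<in>J. K * (1 + \<sigma> j R) - 1) = K * (\<Sum>j\<in>J. 1 + \<sigma> j R) - real (card J)"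
        by (simp add: sum_subtractf sum_distrib_left)
      also have "(\<Sum>j\<in>J. 1 + \<sigma> j R) = real (card J) + \<rho>" unfolding \<rho>_def by (simp add: sum.distrib)
      finally have "(\<Sum>j\<in>J. exp_payoff m \<sigma> j) \<ge> K * (n + \<rho>) - n" using cJ by simp
      then show ?thesis using zs v0eq unfolding K_def by (simp add: algebra_simps)
    qed
    have H5: "1 - M*A \<ge> n*(s*M/(1+\<rho>)) - n"
    proof -
      have "(\<Sum>j\<in>J. exp_payoff m \<sigma> j) \<ge> (\<Sum>j\<in>J. -1 + s * M / (1 + \<rho>))"
        using vR by (intro sum_mono) auto
      also have "(\<Sum>j\<in>J. -1 + s * M / (1 + \<rho>)) = real (card J) * (-1 + s * M / (1 + \<rho>))" by simp
      finally have "(\<Sum>j\<in>J. exp_payoff m \<sigma> j) \<ge> n * (-1 + s * M / (1 + \<rho>))" using cJ by simp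
      then show ?thesis using zs v0eq by (simp add: algebra_simps)
    qed
    have C3: "M + \<rho> \<le> M^2 * A"
    proof -
      have "M * (\<rho> / M) \<le> M * v0" using v0P M2 by (intro mult_left_mono) auto
      then have "\<rho> \<le> M * (M * A - 1)" using M2 v0eq by simp
      then show ?thesis by (simp add: algebra_simps power2_eq_square)
    qed
    show False
      by (rule final_contra[OF M2 M23 n_def r0 rn A0 C1 C3 sn H4 H5])
  qed
qed


end
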